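(* $u_2u_1u_2\subset U$.
   Context: Let $B_3=\langle s_1,s_2\mid s_1s_2s_1=s_2s_1s_2\rangle$, $R_4=\mathbb{Z}[a,b,c,d,d^{-1}]$, and let $H_4$ be the quotient of the group algebra $R_4B_3$ by the relations $s_i^4=as_i^3+bs_i^2+cs_i+d$ for $i=1,2$; identify $s_i$ with their images in $H_4$. For $i=1,2$ let $u_i$ be the $R_4$-subalgebra of $H_4$ generated by $s_i$. For $R_4$-submodules (or elements) $X_1,\dots,X_n$ of $H_4$, $X_1\cdots X_n$ denotes the $R_4$-submodule spanned by all products $x_1\cdots x_n$ with $x_j\in X_j$, and sums are sums of submodules. Define $U'=u_1u_2u_1+u_1s_2s_1^{-1}s_2u_1+u_1s_2^{-1}s_1s_2^{-1}u_1+u_1s_2^{-1}s_1^{-2}s_2^{-1}$ and $U=U'+u_1s_2s_1^{-2}s_2u_1+u_1s_2^{-2}s_1^{-2}s_2^{-2}u_1$. *)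

theory Defs
  imports Main
begin

text \<open>We work in an arbitrary ring A (type 'a) in which central elements a,b,c,d
(d invertible) and units s1,s2 satisfy the defining relations of H_4.  By the
universal property of H_4 this is equivalent to the statement in H_4 itself.
The image of R_4 = Z[a,b,c,d,d^-1] in A is the subring generated by a,b,c,d,d^-1.\<close>

inductive_set subring_gen :: "'a::ring_1 set \<Rightarrow> 'a set" for G where
  gen: "g \<in> G \<Longrightarrow> g \<in> subring_gen G"
| one: "1 \<in> subring_gen G"
| add: "x \<in> subring_gen G \<Longrightarrow> y \<in> subring_gen G \<Longrightarrow> x + y \<in> subring_gen G"
| neg: "x \<in> subring_gen G \<Longrightarrow> - x \<in> subring_gen G"
| mult: "x \<in> subring_gen G \<Longrightarrow> y \<in> subring_gen G \<Longrightarrow> x * y \<in> subring_gen G"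

text \<open>R-linear span (R acts by left multiplication; R is central).\<close>
inductive_set rspan :: "'a::ring_1 set \<Rightarrow> 'a set \<Rightarrow> 'a set" for R X where
  zero: "0 \<in> rspan R X"
| smult: "r \<in> R \<Longrightarrow> x \<in> X \<Longrightarrow> r * x \<in> rspan R X"
| add: "x \<in> rspan R X \<Longrightarrow> y \<in> rspan R X \<Longrightarrow> x + y \<in> rspan R X"

fun prods :: "'a::ring_1 set list \<Rightarrow> 'a set" where
  "prods [] = {1}"
| "prods (X # Xs) = {x * y | x y. x \<in> X \<and> y \<in> prods Xs}"

definition mprod :: "'a::ring_1 set \<Rightarrow> 'a set list \<Rightarrow> 'a set" where
  "mprod R Xs = rspan R (prods Xs)"

definition msum :: "'a::ring_1 set \<Rightarrow> 'a set \<Rightarrow> 'a set" where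
  "msum X Y = {x + y | x y. x \<in> X \<and> y \<in> Y}"

definition ualg :: "'a::ring_1 set \<Rightarrow> 'a \<Rightarrow> 'a set" where
  "ualg R s = rspan R {s ^ k | k. True}"

end

theory Submission imports Defs begin



definition pw :: "'a::ring_1 \<Rightarrow> 'a \<Rightarrow> int \<Rightarrow> 'a" where
  "pw s t n = (if 0 \<le> n then s ^ nat n else t ^ nat (-n))"

lemma pw_suc:
  assumes "s*t=1" "t*s=1" shows "pw s t (n+1) = pw s t n * s"
proof (cases "0 \<le> n")
  case True then have "nat (n+1) = Suc (nat n)" by simp
  with True show ?thesis by (simp add: pw_def power_commutes)
next
  case False
  show ?thesis
  proof (cases "n = -1")
    case True then show ?thesis using assms by (simp add: pw_def)
  next
    case F2: False
    with False have e: "nat (-n) = Suc (nat (-(n+1)))" by simp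
    then have "t ^ nat (-n) = t ^ nat (-(n+1)) * t" by (simp add: power_commutes)
    then have "t ^ nat (-n) * s = t ^ nat (-(n+1))" using assms by (simp add: mult.assoc)
    with False F2 show ?thesis by (simp add: pw_def)
  qed
qed

lemma pw_pred:
  assumes "s*t=1" "t*s=1" shows "pw s t (n-1) = pw s t n * t"
proof -
  have "pw s t n = pw s t (n-1) * s" using pw_suc[OF assms, of "n-1"] by simp
  then have "pw s t n * t = pw s t (n-1)" using assms by (simp add: mult.assoc)
  then show ?thesis by simp
qed

lemma pw_add_nat:
  assumes "s*t=1" "t*s=1" shows "pw s t (m + int k) = pw s t m * s ^ k"
proof (induction k)
  case 0 then show ?case by simp
next
  case (Suc k)
  have "pw s t (m + int (Suc k)) = pw s t ((m + int k) + 1)" by (rule arg_cong[where f="pw s t"]) simp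
  also have "\<dots> = pw s t m * s ^ k * s" using pw_suc[OF assms] Suc by simp
  finally show ?case by (simp add: mult.assoc power_commutes)
qed

lemma pw_sub_nat:
  assumes "s*t=1" "t*s=1" shows "pw s t (m - int k) = pw s t m * t ^ k"
proof (induction k)
  case 0 then show ?case by simp
next
  case (Suc k)
  have "pw s t (m - int (Suc k)) = pw s t ((m - int k) - 1)" by (rule arg_cong[where f="pw s t"]) simp
  also have "\<dots> = pw s t m * t ^ k * t" using pw_pred[OF assms] Suc by simp
  finally show ?case by (simp add: mult.assoc power_commutes)
qed

lemma pw_add:
  assumes "s*t=1" "t*s=1" shows "pw s t (m + n) = pw s t m * pw s t n"
proof (cases "0 \<le> n")
  case True
  then obtain k where "n = int k" by (metis nonneg_int_cases)
  then show ?thesis using pw_add_nat[OF assms] by (simp add: pw_def)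
next
  case False
  then obtain k where k: "n = - int k" by (metis le_cases neg_0_le_iff_le nonpos_int_cases)
  then have "m + n = m - int k" by simp
  then show ?thesis using pw_sub_nat[OF assms] k False by (simp add: pw_def)
qed

lemma pw_vals: "pw s t 0 = 1" "pw s t 1 = s" "pw s t 2 = s*s" "pw s t 3 = s*s*s"
  "pw s t (-1) = t" "pw s t (-2) = t*t" "pw s t (-3) = t*t*t" "pw s t (int k) = s^k"
  by (simp_all add: pw_def power2_eq_square power3_eq_cube)

definition modR :: "'a::ring_1 set \<Rightarrow> 'a set \<Rightarrow> bool" where
  "modR R M \<longleftrightarrow> 0 \<in> M \<and> (\<forall>r\<in>R. \<forall>z\<in>M. r*z \<in> M) \<and> (\<forall>z\<in>M. \<forall>w\<in>M. z+w \<in> M)"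

lemma modR_zero: "modR R M \<Longrightarrow> 0 \<in> M" by (simp add: modR_def)
lemma modR_smult: "modR R M \<Longrightarrow> r \<in> R \<Longrightarrow> z \<in> M \<Longrightarrow> r*z \<in> M" by (simp add: modR_def)
lemma modR_add: "modR R M \<Longrightarrow> z \<in> M \<Longrightarrow> w \<in> M \<Longrightarrow> z+w \<in> M" by (simp add: modR_def)

lemma subring_gen_closed:
  "1 \<in> subring_gen G" "x \<in> subring_gen G \<Longrightarrow> y \<in> subring_gen G \<Longrightarrow> x*y \<in> subring_gen G"
  "x \<in> subring_gen G \<Longrightarrow> y \<in> subring_gen G \<Longrightarrow> x+y \<in> subring_gen G"
  "x \<in> subring_gen G \<Longrightarrow> -x \<in> subring_gen G"
  by (auto intro: subring_gen.intros)

lemma modR_rspan: "modR (subring_gen G) (rspan (subring_gen G) X)"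
proof -
  have "r * z \<in> rspan (subring_gen G) X" if "r \<in> subring_gen G" "z \<in> rspan (subring_gen G) X" for r z
    using that(2)
  proof (induction rule: rspan.induct)
    case zero then show ?case by (simp add: rspan.zero)
  next
    case (smult r' x) then show ?case
      using that(1) by (metis mult.assoc rspan.smult subring_gen.mult)
  next
    case (add x y) then show ?case by (simp add: distrib_left rspan.add)
  qed
  then show ?thesis by (auto simp: modR_def intro: rspan.intros)
qed

lemma modR_msum: "modR R X \<Longrightarrow> modR R Y \<Longrightarrow> modR R (msum X Y)"
  unfolding modR_def msum_def
  apply safe
    apply (rule_tac x=0 in exI, rule_tac x=0 in exI, simp)
   apply (rule_tac x="r*x" in exI, rule_tac x="r*y" in exI, simp add: distrib_left)
  apply (rule_tac x="x+xa" in exI, rule_tac x="y+ya" in exI, simp add: algebra_simps)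
  done

lemma msum_l: "z \<in> X \<Longrightarrow> 0 \<in> Y \<Longrightarrow> z \<in> msum X Y"
  unfolding msum_def by force
lemma msum_r: "z \<in> Y \<Longrightarrow> 0 \<in> X \<Longrightarrow> z \<in> msum X Y"
  unfolding msum_def by force

lemma msum_lmult: "(\<And>z. z \<in> X \<Longrightarrow> g*z \<in> X) \<Longrightarrow> (\<And>z. z \<in> Y \<Longrightarrow> g*z \<in> Y) \<Longrightarrow> z \<in> msum X Y \<Longrightarrow> g*z \<in> msum X Y"
  unfolding msum_def by (force simp: distrib_left)

lemma mprod_lmult:
  assumes P: "\<And>p. p \<in> P \<Longrightarrow> g*p \<in> P" and R: "\<And>r. r \<in> R \<Longrightarrow> g*r = r*g"
    and z: "z \<in> mprod R (P#L)"
  shows "g*z \<in> mprod R (P#L)"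
  using z unfolding mprod_def
proof (induction rule: rspan.induct)
  case zero then show ?case by (simp add: rspan.zero)
next
  case (smult r w)
  then obtain p q where w: "w = p*q" "p \<in> P" "q \<in> prods L" by auto
  have "g*(r*w) = r*((g*p)*q)" using R[OF smult(1)] w
    by (metis mult.assoc)
  moreover have "(g*p)*q \<in> prods (P#L)" using P[OF w(2)] w(3) by auto
  ultimately show ?case using smult(1) by (simp add: rspan.smult)
next
  case (add x y) then show ?case by (simp add: distrib_left rspan.add)
qed

lemma mprod3: "1 \<in> R \<Longrightarrow> p \<in> P \<Longrightarrow> q \<in> Q \<Longrightarrow> s \<in> S \<Longrightarrow> p*q*s \<in> mprod R [P,Q,S]"
  unfolding mprod_def
  using rspan.smult[of 1 R "p*(q*(s*1))" "prods [P,Q,S]"] by (auto simp: mult.assoc)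

lemma mprod2: "1 \<in> R \<Longrightarrow> p \<in> P \<Longrightarrow> q \<in> Q \<Longrightarrow> p*q \<in> mprod R [P,Q]"
  unfolding mprod_def
  using rspan.smult[of 1 R "p*(q*1)" "prods [P,Q]"] by (auto simp: mult.assoc)

lemma modR_mprod: "modR (subring_gen G) (mprod (subring_gen G) L)"
  unfolding mprod_def by (rule modR_rspan)




locale h4 =
  fixes a b c d di x y X Y :: "'a::ring_1" and R u1 u2 :: "'a set"
  assumes central: "\<forall>z. a * z = z * a \<and> b * z = z * b \<and> c * z = z * c \<and> d * z = z * d"
    and dd: "d * di = 1" "di * d = 1"
    and xX: "x * X = 1" "X * x = 1"
    and yY: "y * Y = 1" "Y * y = 1"
    and braid: "x * y * x = y * x * y"
    and q1: "x ^ 4 = a * x ^ 3 + b * x ^ 2 + c * x + d"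
    and q2: "y ^ 4 = a * y ^ 3 + b * y ^ 2 + c * y + d"
    and R_def: "R = subring_gen {a, b, c, d, di}"
    and u1_def: "u1 = ualg R x" and u2_def: "u2 = ualg R y"
begin

lemma di_central: "di * z = z * di"
proof -
  have "di * z = di * z * (d * di)" by (simp add: dd)
  also have "\<dots> = di * (z * d) * di" by (simp add: mult.assoc)
  also have "\<dots> = di * (d * z) * di" using central by simp
  also have "\<dots> = z * di" by (simp add: mult.assoc[symmetric] dd)
  finally show ?thesis .
qed

lemma R_mem: "a \<in> R" "b \<in> R" "c \<in> R" "d \<in> R" "di \<in> R" "1 \<in> R"
  by (auto simp: R_def intro: subring_gen.intros)

lemma R_closed: "r \<in> R \<Longrightarrow> s \<in> R \<Longrightarrow> r*s \<in> R" "r \<in> R \<Longrightarrow> s \<in> R \<Longrightarrow> r+s \<in> R"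
   "r \<in> R \<Longrightarrow> -r \<in> R"
  by (auto simp: R_def intro: subring_gen.intros)

lemma R_central: "r \<in> R \<Longrightarrow> r * z = z * r"
  unfolding R_def
proof (induction rule: subring_gen.induct)
  case (gen g) then show ?case using central di_central by auto
next
  case one then show ?case by simp
next
  case (add p q) then show ?case by (simp add: distrib_left distrib_right)
next
  case (neg p) then show ?case by simp
next
  case (mult p q) then show ?case by (metis mult.assoc)
qed

lemma modR_neg: "modR R M \<Longrightarrow> z \<in> M \<Longrightarrow> -z \<in> M"
  using modR_smult[of R M "-1" z] R_closed(3)[OF R_mem(6)] by simp

lemma modR_lin4: "modR R M \<Longrightarrow> r1 \<in> R \<Longrightarrow> r2 \<in> R \<Longrightarrow> r3 \<in> R \<Longrightarrow> r4 \<in> R \<Longrightarrow>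
   z1 \<in> M \<Longrightarrow> z2 \<in> M \<Longrightarrow> z3 \<in> M \<Longrightarrow> z4 \<in> M \<Longrightarrow> r1*z1 + r2*z2 + r3*z3 + r4*z4 \<in> M"
  by (intro modR_add modR_smult)

lemma window:
  assumes st: "s*t=1" "t*s=1" and qs: "s^4 = a*s^3+b*s^2+c*s+d" and M: "modR R M"
    and b0: "w * pw s t nb * z \<in> M" and b1: "w * pw s t (nb+1) * z \<in> M"
    and b2: "w * pw s t (nb+2) * z \<in> M" and b3: "w * pw s t (nb+3) * z \<in> M"
  shows "w * pw s t n * z \<in> M"
proof -
  define g where "g n = w * pw s t n * z" for n
  have cen: "w * (r * p) * z = r * (w * p * z)" if "r \<in> {a,b,c,d}" for r p
  proof -
    have "w * r = r * w" using that central by auto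
    then show ?thesis by (metis mult.assoc)
  qed
  have pwrec: "pw s t (n+4) = a * pw s t (n+3) + b * pw s t (n+2) + c * pw s t (n+1) + d * pw s t n" for n
  proof -
    have e: "pw s t (n + int k) = pw s t n * s^k" for k using pw_add_nat[OF st] by simp
    have "pw s t (n+4) = pw s t n * s^4" using e[of 4] by simp
    also have "\<dots> = pw s t n * a * s^3 + pw s t n * b * s^2 + pw s t n * c * s + pw s t n * d"
      by (simp add: qs distrib_left mult.assoc)
    also have "\<dots> = a * (pw s t n * s^3) + b * (pw s t n * s^2) + c * (pw s t n * s) + d * pw s t n"
    proof -
      have "pw s t n * a = a * pw s t n" "pw s t n * b = b * pw s t n"
           "pw s t n * c = c * pw s t n" "pw s t n * d = d * pw s t n" using central by metis+
      then show ?thesis by (simp only: mult.assoc[symmetric])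
    qed
    also have "\<dots> = a * pw s t (n+3) + b * pw s t (n+2) + c * pw s t (n+1) + d * pw s t n"
      using e[of 3] e[of 2] e[of 1] by simp
    finally show ?thesis .
  qed
  have grec: "g (n+4) = a * g (n+3) + b * g (n+2) + c * g (n+1) + d * g n" for n
    unfolding g_def pwrec by (simp add: distrib_left distrib_right cen)
  have gdown: "g (n-1) = di * g (n+3) + (-(di*a)) * g (n+2) + (-(di*b)) * g (n+1) + (-(di*c)) * g n" for n
  proof -
    have "g (n+3) = a * g (n+2) + b * g (n+1) + c * g n + d * g (n-1)"
    proof -
      have "n-1+4 = n+3" "n-1+3 = n+2" "n-1+2 = n+1" "n-1+1 = n" by simp_all
      then show ?thesis using grec[of "n-1"] by (simp only:)
    qed
    then have "d * g (n-1) = g (n+3) - a * g (n+2) - b * g (n+1) - c * g n" by (simp add: algebra_simps)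
    then have "di * (d * g (n-1)) = di * (g (n+3) - a * g (n+2) - b * g (n+1) - c * g n)" by simp
    then show ?thesis
      by (simp only: mult.assoc[symmetric] dd mult_1_left right_diff_distrib diff_conv_add_uminus minus_mult_left distrib_left mult_minus_right)
  qed
  have up: "g (nb + int j) \<in> M \<and> g (nb + int j + 1) \<in> M \<and> g (nb + int j + 2) \<in> M \<and> g (nb + int j + 3) \<in> M" for j
  proof (induction j)
    case 0 then show ?case using b0 b1 b2 b3 by (simp add: g_def)
  next
    case (Suc j)
    have "g (nb + int j + 4) \<in> M"
      unfolding grec[of "nb + int j"] using Suc M R_mem
      by (intro modR_lin4) (simp_all add: add.assoc)
    then show ?case using Suc by (simp add: algebra_simps)
  qed
  have down: "g (nb - int j) \<in> M \<and> g (nb - int j + 1) \<in> M \<and> g (nb - int j + 2) \<in> M \<and> g (nb - int j + 3) \<in> M" for j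
  proof (induction j)
    case 0 then show ?case using b0 b1 b2 b3 by (simp add: g_def)
  next
    case (Suc j)
    have "g (nb - int j - 1) \<in> M"
      unfolding gdown[of "nb - int j"] using Suc M R_mem
      by (intro modR_lin4) (simp_all add: R_closed)
    then show ?case using Suc by (simp add: algebra_simps)
  qed
  show ?thesis
  proof (cases "nb \<le> n")
    case True
    then have "n = nb + int (nat (n - nb))" by simp
    then show ?thesis using up[of "nat (n - nb)"] by (simp add: g_def)
  next
    case False
    then have "n = nb - int (nat (nb - n))" by simp
    then show ?thesis using down[of "nat (nb - n)"] by (simp add: g_def)
  qed
qed

end



context h4 begin

lemma inv_t: "x*(X*z) = z" "X*(x*z) = z" "y*(Y*z) = z" "Y*(y*z) = z"
  by (simp_all add: mult.assoc[symmetric] xX yY)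
lemma br: "x*(y*(x*z)) = y*(x*(y*z))"
  by (metis braid mult.assoc)

lemma G1: "y*(x*(Y*z)) = X*(y*(x*z))"
proof -
  have "X*(y*(x*z)) = X*(y*(x*(y*(Y*z))))" by (simp add: inv_t)
  also have "\<dots> = X*(x*(y*(x*(Y*z))))" by (simp add: br)
  also have "\<dots> = y*(x*(Y*z))" by (simp add: inv_t)
  finally show ?thesis by simp
qed
lemma G2: "Y*(x*(y*z)) = x*(y*(X*z))"
proof -
  have "x*(y*(X*z)) = Y*(y*(x*(y*(X*z))))" by (simp add: inv_t)
  also have "\<dots> = Y*(x*(y*(x*(X*z))))" by (simp add: br)
  also have "\<dots> = Y*(x*(y*z))" by (simp add: inv_t)
  finally show ?thesis by simp
qed

lemma i1: "y*x*Y = X*y*x" by (metis G1 mult.assoc mult_1_right)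
lemma i2: "y*y*x*Y = y*X*y*x" by (metis G1 mult.assoc mult_1_right)
lemma i3: "Y*x*y = x*y*X" by (metis G2 mult.assoc mult_1_right)
lemma i4: "y*x*y = x*y*x" by (metis braid)
lemma i5: "y*y*x*y = x*y*(x*x)" by (metis braid mult.assoc)
lemma i6: "Y*Y*x*(y*y) = x*(y*(X*X)*y)" by (metis G2 mult.assoc mult_1_right)
lemma i7: "Y*x*(y*y) = x*(y*X*y)" by (metis G2 mult.assoc mult_1_right)
lemma i8: "y*x*(y*y) = x*x*y*x" by (metis braid mult.assoc)

lemma G5: "Y*(X*(Y*z)) = X*(Y*(X*z))"
proof -
  have "X*(Y*(X*z)) = X*(Y*(X*(y*(x*(y*(Y*(X*(Y*z))))))))" by (simp add: inv_t)
  also have "\<dots> = X*(Y*(X*(x*(y*(x*(Y*(X*(Y*z))))))))" by (simp add: br)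
  also have "\<dots> = Y*(X*(Y*z))" by (simp add: inv_t)
  finally show ?thesis by simp
qed
lemma G3: "Y*(X*(y*z)) = x*(Y*(X*z))"
proof -
  have "x*(Y*(X*z)) = Y*(X*(y*(Y*(x*(y*(x*(Y*(X*z))))))))" by (simp add: inv_t)
  also have "\<dots> = Y*(X*(y*(x*(y*(X*(x*(Y*(X*z))))))))" by (simp add: G2)
  also have "\<dots> = Y*(X*(y*z))" by (simp add: inv_t)
  finally show ?thesis by simp
qed
lemma G4: "y*(X*(Y*z)) = X*(Y*(x*z))"
proof -
  have "X*(Y*(x*z)) = y*(X*(Y*(y*(x*(Y*(X*(Y*(x*z))))))))" by (simp add: inv_t)
  also have "\<dots> = y*(X*(Y*(X*(y*(x*(X*(Y*(x*z))))))))" by (simp add: G1)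
  also have "\<dots> = y*(X*(Y*z))" by (simp add: inv_t)
  finally show ?thesis by simp
qed
lemma j1: "Y*Y*X*(Y*Y) = X*(Y*(X*X)*Y)" by (metis G5 mult.assoc mult_1_right)
lemma j2: "Y*X*(Y*Y) = X*X*Y*X" by (metis G5 mult.assoc mult_1_right)
lemma j3: "y*X*(Y*Y) = X*(Y*x*Y)" by (metis G4 mult.assoc mult_1_right)
lemma j4: "Y*X*Y = X*Y*X" by (metis G5 mult.assoc mult_1_right)
lemma j5: "y*X*Y = X*Y*x" by (metis G4 mult.assoc mult_1_right)
lemma j6: "y*y*X*Y = X*Y*(x*x)" by (metis G4 mult.assoc mult_1_right)
lemma j7: "Y*Y*X*y = Y*x*Y*X" by (metis G3 mult.assoc mult_1_right)
lemma j8: "Y*X*y = x*Y*X" by (metis G3 mult.assoc mult_1_right)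
lemma k1: "Y*(x*x)*(Y*Y) = x*(y*y*X*(Y*Y*Y))" by (metis G2 inv_t mult.assoc mult_1_right)
lemma k2: "y*(x*x)*(Y*Y) = X*(y*X*y)*x" by (metis G1 inv_t mult.assoc mult_1_right)
lemma k3: "y*(x*x)*Y = X*(y*y)*x" by (metis G1 inv_t mult.assoc mult_1_right)
lemma k4: "y*y*(X*X)*Y = X*(Y*x*Y)*x" by (metis G4 inv_t mult.assoc mult_1_right)
lemma k5: "Y*Y*(x*x)*y = x*(y*X*y)*X" by (metis G2 inv_t mult.assoc mult_1_right)
lemma k6: "Y*(x*x)*y = x*(y*y)*X" by (metis G2 inv_t mult.assoc mult_1_right)
end



context h4 begin

lemma ualg_mod: "modR R (ualg R s)"
  unfolding ualg_def R_def by (rule modR_rspan)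

lemma ualg_pow: "s^k \<in> ualg R s"
  unfolding ualg_def using rspan.smult[of 1 R "s^k" "{s ^ k |k. True}"] R_mem(6) by auto

lemma ualg_pw:
  assumes st: "s*t=1" "t*s=1" and qs: "s^4 = a*s^3+b*s^2+c*s+d"
  shows "pw s t n \<in> ualg R s"
proof -
  have "1 * pw s t n * 1 \<in> ualg R s"
    by (rule window[OF st qs ualg_mod[of s], where w=1 and z=1 and nb=0])
      (use ualg_pow[of s 0] ualg_pow[of s 1] ualg_pow[of s 2] ualg_pow[of s 3] in
        \<open>simp_all add: pw_vals power2_eq_square power3_eq_cube\<close>)
  then show ?thesis by simp
qed

lemma ualg_lmult:
  assumes st: "s*t=1" "t*s=1" and qs: "s^4 = a*s^3+b*s^2+c*s+d"
    and g: "g = s \<or> g = t" and z: "z \<in> ualg R s"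
  shows "g * z \<in> ualg R s"
  using z unfolding ualg_def
proof (induction rule: rspan.induct)
  case zero then show ?case by (simp add: rspan.zero)
next
  case (smult r w)
  then obtain k where w: "w = s^k" by auto
  have "g * (r * w) = r * (g * w)" using R_central[OF smult(1)] by (metis mult.assoc)
  moreover have "g * w \<in> ualg R s"
  proof (cases "g = s")
    case True
    then have "g * w = s ^ Suc k" by (simp add: w)
    then show ?thesis using ualg_pow[of s "Suc k"] by simp
  next
    case False
    then have "g = t" using g by simp
    then have "g * w = pw s t (-1 + int k)" using pw_add[OF st, of "-1" "int k"] by (simp add: w pw_vals)
    then show ?thesis using ualg_pw[OF st qs] by simp
  qed
  ultimately show ?case using modR_smult[OF ualg_mod smult(1)] unfolding ualg_def by simp
next
  case (add p q) then show ?case by (simp add: distrib_left rspan.add)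
qed

lemma xx_exp: "x*x = a*x + b + c*X + d*(X*X)"
proof -
  have "x^4 * (X*X) = x*x" by (simp add: numeral_eq_Suc mult.assoc inv_t xX)
  moreover have "(a * x ^ 3 + b * x ^ 2 + c * x + d) * (X*X) = a*x + b + c*X + d*(X*X)"
    by (simp add: numeral_eq_Suc mult.assoc inv_t xX distrib_right)
  ultimately show ?thesis using q1 by simp
qed

end

locale h4U = h4 +
  fixes U' U :: "'a::ring_1 set"
  assumes U'_def: "U' = msum (msum (msum (mprod R [u1, u2, u1])
                    (mprod R [u1, {y * X * y}, u1]))
                    (mprod R [u1, {Y * x * Y}, u1]))
                    (mprod R [u1, {Y * X ^ 2 * Y}])"
    and U_def: "U = msum (msum U' (mprod R [u1, {y * X ^ 2 * y}, u1]))
                    (mprod R [u1, {Y ^ 2 * X ^ 2 * Y ^ 2}, u1])"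
begin

lemma modM: "modR R (mprod R L)" unfolding R_def by (rule modR_mprod)
lemma zM: "0 \<in> mprod R L" using modR_zero[OF modM] .

lemma modU: "modR R U"
  unfolding U_def U'_def by (intro modR_msum modM)

lemma u1_mod: "modR R u1" and u2_mod: "modR R u2" unfolding u1_def u2_def by (rule ualg_mod)+

abbreviation "Px \<equiv> pw x X"
abbreviation "Py \<equiv> pw y Y"

lemma Px_u1: "Px n \<in> u1" unfolding u1_def by (rule ualg_pw[OF xX q1])
lemma Py_u2: "Py n \<in> u2" unfolding u2_def by (rule ualg_pw[OF yY q2])

lemma u1_el: "1 \<in> u1" "x \<in> u1" "X \<in> u1" "x*x \<in> u1"
  using Px_u1[of 0] Px_u1[of 1] Px_u1[of "-1"] Px_u1[of 2] by (simp_all add: pw_vals)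
lemma u2_el: "1 \<in> u2" "y \<in> u2" "Y \<in> u2" "y*y \<in> u2" "Y*Y \<in> u2"
  using Py_u2[of 0] Py_u2[of 1] Py_u2[of "-1"] Py_u2[of 2] Py_u2[of "-2"] by (simp_all add: pw_vals)

lemma u1_lmult: "z \<in> u1 \<Longrightarrow> x * z \<in> u1" "z \<in> u1 \<Longrightarrow> X * z \<in> u1"
  unfolding u1_def using ualg_lmult[OF xX q1] by blast+

lemma memA: "p \<in> u1 \<Longrightarrow> q \<in> u2 \<Longrightarrow> r \<in> u1 \<Longrightarrow> p*q*r \<in> U"
  unfolding U_def U'_def
  by (intro msum_l mprod3 zM R_mem(6)) auto
lemma memB: "p \<in> u1 \<Longrightarrow> r \<in> u1 \<Longrightarrow> p*(y*X*y)*r \<in> U"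
  unfolding U_def U'_def
  by (intro msum_l msum_r mprod3 zM R_mem(6) modR_zero[OF modR_msum] modM) auto
lemma memC: "p \<in> u1 \<Longrightarrow> r \<in> u1 \<Longrightarrow> p*(Y*x*Y)*r \<in> U"
  unfolding U_def U'_def
  by (intro msum_l msum_r mprod3 zM R_mem(6) modR_zero[OF modR_msum] modM) auto
lemma memD: "p \<in> u1 \<Longrightarrow> p*(Y*(X*X)*Y) \<in> U"
  unfolding U_def U'_def power2_eq_square
  by (intro msum_l msum_r mprod2 zM R_mem(6) modR_zero[OF modR_msum] modM) auto
lemma memE: "p \<in> u1 \<Longrightarrow> r \<in> u1 \<Longrightarrow> p*(y*(X*X)*y)*r \<in> U"
  unfolding U_def U'_def power2_eq_square
  by (intro msum_l msum_r mprod3 zM R_mem(6) modR_zero[OF modR_msum] modM) auto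
lemma memF: "p \<in> u1 \<Longrightarrow> r \<in> u1 \<Longrightarrow> p*(Y*Y*(X*X)*(Y*Y))*r \<in> U"
  unfolding U_def U'_def power2_eq_square
  by (intro msum_l msum_r mprod3 zM R_mem(6) modR_zero[OF modR_msum] modM) auto

lemma U_lmult: assumes "g = x \<or> g = X" "z \<in> U" shows "g * z \<in> U"
proof -
  have P: "\<And>p. p \<in> u1 \<Longrightarrow> g*p \<in> u1" using assms(1) u1_lmult by blast
  have Rc: "\<And>r. r \<in> R \<Longrightarrow> g*r = r*g" using R_central by metis
  have cM: "\<forall>w \<in> mprod R (u1#L). g*w \<in> mprod R (u1#L)" for L
    using mprod_lmult[OF P Rc] by blast
  have cS: "\<forall>w \<in> msum A B. g*w \<in> msum A B" if "\<forall>w \<in> A. g*w \<in> A" "\<forall>w \<in> B. g*w \<in> B" for A B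
    using msum_lmult[of A g B] that by blast
  have "\<forall>w \<in> U. g*w \<in> U" unfolding U_def U'_def
    by (intro cS cM)
  then show ?thesis using assms(2) by blast
qed

end



context h4U begin

lemmas wy = window[OF yY q2 modU]
lemmas wx = window[OF xX q1 modU]

lemma L0: "Py k * Py m \<in> U"
  using memA[OF u1_el(1) Py_u2[of "k+m"] u1_el(1)] pw_add[OF yY, of k m] by simp

lemma L1: "Py k * x * Py m \<in> U"
proof -
  have m1: "1 * Py k' * (x * Py (-1)) \<in> U" for k'
  proof (rule wy[where nb="-1"])
    show "1 * Py (-1) * (x * Py (-1)) \<in> U" using memC[OF u1_el(1) u1_el(1)] by (simp add: pw_vals mult.assoc)
    show "1 * Py (-1+1) * (x * Py (-1)) \<in> U" using memA[OF u1_el(2) u2_el(3) u1_el(1)] by (simp add: pw_vals mult.assoc)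
    show "1 * Py (-1+2) * (x * Py (-1)) \<in> U" using memA[OF u1_el(3) u2_el(2) u1_el(2)] i1 by (simp add: pw_vals mult.assoc)
    show "1 * Py (-1+3) * (x * Py (-1)) \<in> U" using memB[OF u1_el(1) u1_el(2)] i2 by (simp add: pw_vals mult.assoc)
  qed
  have m0: "1 * Py k' * (x * Py 0) \<in> U" for k'
    using memA[OF u1_el(1) Py_u2[of k'] u1_el(2)] by (simp add: pw_vals mult.assoc)
  have m2: "1 * Py k' * (x * Py 1) \<in> U" for k'
  proof (rule wy[where nb="-1"])
    show "1 * Py (-1) * (x * Py 1) \<in> U" using memA[OF u1_el(2) u2_el(2) u1_el(3)] i3 by (simp add: pw_vals mult.assoc)
    show "1 * Py (-1+1) * (x * Py 1) \<in> U" using memA[OF u1_el(2) u2_el(2) u1_el(1)] by (simp add: pw_vals mult.assoc)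
    show "1 * Py (-1+2) * (x * Py 1) \<in> U" using memA[OF u1_el(2) u2_el(2) u1_el(2)] i4 by (simp add: pw_vals mult.assoc)
    show "1 * Py (-1+3) * (x * Py 1) \<in> U" using memA[OF u1_el(2) u2_el(2) u1_el(4)] i5 by (simp add: pw_vals mult.assoc)
  qed
  have m3: "1 * Py k' * (x * Py 2) \<in> U" for k'
  proof (rule wy[where nb="-2"])
    show "1 * Py (-2) * (x * Py 2) \<in> U" using memE[OF u1_el(2) u1_el(1)] i6 by (simp add: pw_vals mult.assoc)
    show "1 * Py (-2+1) * (x * Py 2) \<in> U" using memB[OF u1_el(2) u1_el(1)] i7 by (simp add: pw_vals mult.assoc)
    show "1 * Py (-2+2) * (x * Py 2) \<in> U" using memA[OF u1_el(2) u2_el(4) u1_el(1)] by (simp add: pw_vals mult.assoc)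
    show "1 * Py (-2+3) * (x * Py 2) \<in> U" using memA[OF u1_el(4) u2_el(2) u1_el(2)] i8 by (simp add: pw_vals mult.assoc)
  qed
  have "(Py k * x) * Py m * 1 \<in> U"
    by (rule wy[where nb="-1"]) (use m1[of k] m0[of k] m2[of k] m3[of k] in \<open>simp_all add: mult.assoc\<close>)
  then show ?thesis by simp
qed


lemma Lm1: "Py k * X * Py m \<in> U"
proof -
  have m1: "1 * Py k' * (X * Py (-2)) \<in> U" for k'
  proof (rule wy[where nb="-2"])
    show "1 * Py (-2) * (X * Py (-2)) \<in> U" using memD[OF u1_el(3)] j1 by (simp add: pw_vals mult.assoc)
    show "1 * Py (-2+1) * (X * Py (-2)) \<in> U" using memA[OF u1_lmult(2)[OF u1_el(3)] u2_el(3) u1_el(3)] j2 by (simp add: pw_vals mult.assoc)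
    show "1 * Py (-2+2) * (X * Py (-2)) \<in> U" using memA[OF u1_el(3) u2_el(5) u1_el(1)] by (simp add: pw_vals mult.assoc)
    show "1 * Py (-2+3) * (X * Py (-2)) \<in> U" using memC[OF u1_el(3) u1_el(1)] j3 by (simp add: pw_vals mult.assoc)
  qed
  have m2: "1 * Py k' * (X * Py (-1)) \<in> U" for k'
  proof (rule wy[where nb="-1"])
    show "1 * Py (-1) * (X * Py (-1)) \<in> U" using memA[OF u1_el(3) u2_el(3) u1_el(3)] j4 by (simp add: pw_vals mult.assoc)
    show "1 * Py (-1+1) * (X * Py (-1)) \<in> U" using memA[OF u1_el(3) u2_el(3) u1_el(1)] by (simp add: pw_vals mult.assoc)
    show "1 * Py (-1+2) * (X * Py (-1)) \<in> U" using memA[OF u1_el(3) u2_el(3) u1_el(2)] j5 by (simp add: pw_vals mult.assoc)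
    show "1 * Py (-1+3) * (X * Py (-1)) \<in> U" using memA[OF u1_el(3) u2_el(3) u1_el(4)] j6 by (simp add: pw_vals mult.assoc)
  qed
  have m3: "1 * Py k' * (X * Py 0) \<in> U" for k'
    using memA[OF u1_el(1) Py_u2[of k'] u1_el(3)] by (simp add: pw_vals mult.assoc)
  have m4: "1 * Py k' * (X * Py 1) \<in> U" for k'
  proof (rule wy[where nb="-2"])
    show "1 * Py (-2) * (X * Py 1) \<in> U" using memC[OF u1_el(1) u1_el(3)] j7 by (simp add: pw_vals mult.assoc)
    show "1 * Py (-2+1) * (X * Py 1) \<in> U" using memA[OF u1_el(2) u2_el(3) u1_el(3)] j8 by (simp add: pw_vals mult.assoc)
    show "1 * Py (-2+2) * (X * Py 1) \<in> U" using memA[OF u1_el(3) u2_el(2) u1_el(1)] by (simp add: pw_vals mult.assoc)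
    show "1 * Py (-2+3) * (X * Py 1) \<in> U" using memB[OF u1_el(1) u1_el(1)] by (simp add: pw_vals mult.assoc)
  qed
  have "(Py k * X) * Py m * 1 \<in> U"
    by (rule wy[where nb="-2"]) (use m1[of k] m2[of k] m3[of k] m4[of k] in \<open>simp_all add: mult.assoc\<close>)
  then show ?thesis by simp
qed

lemma EQ: assumes "Py k * (X*X) * Py m \<in> U" shows "Py k * (x*x) * Py m \<in> U"
proof -
  have cen: "Py k * (r * w) * Py m = r * (Py k * w * Py m)" if "r \<in> R" for r w
    using R_central[OF that] by (metis mult.assoc)
  have "Py k * (x*x) * Py m = a * (Py k * x * Py m) + b * (Py k * Py m) + c * (Py k * X * Py m) + d * (Py k * (X*X) * Py m)"
    unfolding xx_exp using cen[of a x] cen[of b 1] cen[of c X] cen[of d "X*X"] R_mem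
    by (simp add: distrib_left distrib_right)
  also have "\<dots> \<in> U" using modR_lin4[OF modU R_mem(1-4) L1 L0 Lm1 assms] .
  finally show ?thesis .
qed

lemma L2: "Py k * (x*x) * Py m \<in> U"
proof -
  have m1: "1 * Py k' * ((x*x) * Py (-2)) \<in> U" for k'
  proof (rule wy[where nb="-2"])
    show "1 * Py (-2) * ((x*x) * Py (-2)) \<in> U" using EQ[of "-2" "-2"] memF[OF u1_el(1) u1_el(1)] by (simp add: pw_vals mult.assoc)
    show "1 * Py (-2+1) * ((x*x) * Py (-2)) \<in> U" using U_lmult[of x, OF _ Lm1[of 2 "-3"]] k1 by (simp add: pw_vals mult.assoc)
    show "1 * Py (-2+2) * ((x*x) * Py (-2)) \<in> U" using memA[OF u1_el(4) u2_el(5) u1_el(1)] by (simp add: pw_vals mult.assoc)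
    show "1 * Py (-2+3) * ((x*x) * Py (-2)) \<in> U" using memB[OF u1_el(3) u1_el(2)] k2 by (simp add: pw_vals mult.assoc)
  qed
  have m2: "1 * Py k' * ((x*x) * Py (-1)) \<in> U" for k'
  proof (rule wy[where nb="-1"])
    show "1 * Py (-1) * ((x*x) * Py (-1)) \<in> U" using EQ[of "-1" "-1"] memD[OF u1_el(1)] by (simp add: pw_vals mult.assoc)
    show "1 * Py (-1+1) * ((x*x) * Py (-1)) \<in> U" using memA[OF u1_el(4) u2_el(3) u1_el(1)] by (simp add: pw_vals mult.assoc)
    show "1 * Py (-1+2) * ((x*x) * Py (-1)) \<in> U" using memA[OF u1_el(3) u2_el(4) u1_el(2)] k3 by (simp add: pw_vals mult.assoc)
    show "1 * Py (-1+3) * ((x*x) * Py (-1)) \<in> U" using EQ[of 2 "-1"] memC[OF u1_el(3) u1_el(2)] k4 by (simp add: pw_vals mult.assoc)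
  qed
  have m3: "1 * Py k' * ((x*x) * Py 0) \<in> U" for k'
    using memA[OF u1_el(1) Py_u2[of k'] u1_el(4)] by (simp add: pw_vals mult.assoc)
  have m4: "1 * Py k' * ((x*x) * Py 1) \<in> U" for k'
  proof (rule wy[where nb="-2"])
    show "1 * Py (-2) * ((x*x) * Py 1) \<in> U" using memB[OF u1_el(2) u1_el(3)] k5 by (simp add: pw_vals mult.assoc)
    show "1 * Py (-2+1) * ((x*x) * Py 1) \<in> U" using memA[OF u1_el(2) u2_el(4) u1_el(3)] k6 by (simp add: pw_vals mult.assoc)
    show "1 * Py (-2+2) * ((x*x) * Py 1) \<in> U" using memA[OF u1_el(4) u2_el(2) u1_el(1)] by (simp add: pw_vals mult.assoc)
    show "1 * Py (-2+3) * ((x*x) * Py 1) \<in> U" using EQ[of 1 1] memE[OF u1_el(1) u1_el(1)] by (simp add: pw_vals mult.assoc)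
  qed
  have "(Py k * (x*x)) * Py m * 1 \<in> U"
    by (rule wy[where nb="-2"]) (use m1[of k] m2[of k] m3[of k] m4[of k] in \<open>simp_all add: mult.assoc\<close>)
  then show ?thesis by simp
qed

lemma Lall: "Py k * Px l * Py m \<in> U"
  by (rule wx[where nb="-1"]) (use Lm1[of k m] L0[of k m] L1[of k m] L2[of k m] in \<open>simp_all add: pw_vals\<close>)


lemma main: "mprod R [u2, u1, u2] \<subseteq> U"
proof -
  have base: "y^k * x^l * y^m \<in> U" for k l m
    using Lall[of "int k" "int l" "int m"] by (simp add: pw_vals)
  have s3: "y^k * x^l * r' \<in> U" if "r' \<in> u2" for k l r'
    using that unfolding u2_def ualg_def
  proof (induction rule: rspan.induct)
    case zero then show ?case using modR_zero[OF modU] by simp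
  next
    case (smult r w)
    then obtain m where w: "w = y^m" by auto
    have "y^k * x^l * (r * w) = r * (y^k * x^l * w)" using R_central[OF smult(1)] by (metis mult.assoc)
    then show ?case using modR_smult[OF modU smult(1) base[of k l m]] w by simp
  next
    case (add p q) then show ?case using modR_add[OF modU] by (simp add: distrib_left)
  qed
  have s2: "y^k * q * r' \<in> U" if "q \<in> u1" "r' \<in> u2" for k q r'
    using that(1) unfolding u1_def ualg_def
  proof (induction rule: rspan.induct)
    case zero then show ?case using modR_zero[OF modU] by simp
  next
    case (smult r w)
    then obtain l where w: "w = x^l" by auto
    have "y^k * (r * w) * r' = r * (y^k * w * r')" using R_central[OF smult(1)] by (metis mult.assoc)
    then show ?case using modR_smult[OF modU smult(1) s3[OF that(2), of k l]] w by simp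
  next
    case (add p q) then show ?case using modR_add[OF modU] by (simp add: distrib_left distrib_right)
  qed
  have s1: "p * q * r' \<in> U" if "p \<in> u2" "q \<in> u1" "r' \<in> u2" for p q r'
    using that(1) unfolding u2_def ualg_def
  proof (induction rule: rspan.induct)
    case zero then show ?case using modR_zero[OF modU] by simp
  next
    case (smult r w)
    then obtain k where w: "w = y^k" by auto
    have "(r * w) * q * r' = r * (w * q * r')" by (simp add: mult.assoc)
    then show ?case using modR_smult[OF modU smult(1) s2[OF that(2,3), of k]] w by simp
  next
    case (add p1 p2) then show ?case using modR_add[OF modU] by (simp add: distrib_right)
  qed
  show ?thesis
  proof
    fix z assume "z \<in> mprod R [u2, u1, u2]"
    then show "z \<in> U" unfolding mprod_def
    proof (induction rule: rspan.induct)
      case zero then show ?case using modR_zero[OF modU] by simp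
    next
      case (smult r w)
      then obtain p q s where "w = p*(q*(s*1))" "p \<in> u2" "q \<in> u1" "s \<in> u2" by auto
      then have "w \<in> U" using s1 by (simp add: mult.assoc)
      then show ?case using modR_smult[OF modU smult(1)] by simp
    next
      case (add p q) then show ?case using modR_add[OF modU] by simp
    qed
  qed
qed

end

theorem proposition3p2:
  fixes a b c d di s1 s2 t1 t2 :: "'a::ring_1"
  assumes central: "\<forall>x. a * x = x * a \<and> b * x = x * b \<and> c * x = x * c \<and> d * x = x * d"
    and d_inv: "d * di = 1" "di * d = 1"
    and s1_inv: "s1 * t1 = 1" "t1 * s1 = 1"
    and s2_inv: "s2 * t2 = 1" "t2 * s2 = 1"
    and braid: "s1 * s2 * s1 = s2 * s1 * s2"
    and quart1: "s1 ^ 4 = a * s1 ^ 3 + b * s1 ^ 2 + c * s1 + d"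
    and quart2: "s2 ^ 4 = a * s2 ^ 3 + b * s2 ^ 2 + c * s2 + d"
  defines "R \<equiv> subring_gen {a, b, c, d, di}"
  defines "u1 \<equiv> ualg R s1" and "u2 \<equiv> ualg R s2"
  defines "U' \<equiv> msum (msum (msum (mprod R [u1, u2, u1])
                    (mprod R [u1, {s2 * t1 * s2}, u1]))
                    (mprod R [u1, {t2 * s1 * t2}, u1]))
                    (mprod R [u1, {t2 * t1 ^ 2 * t2}])"
  defines "U \<equiv> msum (msum U' (mprod R [u1, {s2 * t1 ^ 2 * s2}, u1]))
                    (mprod R [u1, {t2 ^ 2 * t1 ^ 2 * t2 ^ 2}, u1])"
  shows "mprod R [u2, u1, u2] \<subseteq> U"
proof -
  have I: "h4U a b c d di s1 s2 t1 t2 R u1 u2 U' U"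
    unfolding h4U_def h4U_axioms_def h4_def
    using central d_inv s1_inv s2_inv braid quart1 quart2
    by (simp add: R_def u1_def u2_def U'_def U_def)
  show ?thesis by (rule h4U.main[OF I])
qed



end
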